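(* Let $\alpha>-1$ and let $n\ge 0$ be an integer. The matrix $\big((\alpha+1)_{j+k}\big)_{j,k=0}^{n}$ is invertible and \[ \big((\alpha+1)_{j+k}\big)_{j,k=0}^{n}{}^{-1}=\left(\sum_{\ell=0}^{n}\frac{(\alpha+1)_{\ell}\,(-\ell)_{j}\,(-\ell)_{k}}{\ell!\,(\alpha+1)_{j}\,(\alpha+1)_{k}\,j!\,k!}\right)_{j,k=0}^{n}. \]
   Context: For a complex number $z$ and integer $m\ge0$, $(z)_m=z(z+1)\cdots(z+m-1)$ denotes the shifted factorial, with $(z)_0=1$ (so $(-\ell)_j=0$ when $j>\ell$). *)

theory Defs
  imports "Jordan_Normal_Form.Matrix"
begin

definition hankel_poch :: "real \<Rightarrow> nat \<Rightarrow> real mat" where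
  "hankel_poch \<alpha> n = mat (Suc n) (Suc n) (\<lambda>(j,k). pochhammer (\<alpha> + 1) (j + k))"

definition hankel_poch_inv :: "real \<Rightarrow> nat \<Rightarrow> real mat" where
  "hankel_poch_inv \<alpha> n = mat (Suc n) (Suc n) (\<lambda>(j,k).
     \<Sum>l = 0..n. pochhammer (\<alpha> + 1) l * pochhammer (- real l) j * pochhammer (- real l) k
       / (fact l * pochhammer (\<alpha> + 1) j * pochhammer (\<alpha> + 1) k * fact j * fact k))"

end

theory Submission
  imports Defs "Jordan_Normal_Form.Determinant" "HOL-Computational_Algebra.Formal_Power_Series"
begin

lemma Q_choose:
  "pochhammer (- real l) j = (-1)^j * fact j * real (l choose j)"
proof -
  have "real (l choose j) = (real l gchoose j)" by (simp add: binomial_gbinomial)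
  also have "\<dots> = (-1)^j * pochhammer (- real l) j / fact j" by (rule gbinomial_pochhammer)
  finally have e: "real (l choose j) = (-1)^j * pochhammer (- real l) j / fact j" .
  have "(-1::real)^j * (-1)^j = 1" by (simp flip: power_add)
  then show ?thesis unfolding e by (simp add: field_simps)
qed

lemma lemA:
  fixes a :: real
  assumes a: "a > 0" and ln: "l \<le> n"
  shows "(\<Sum>j=0..n. pochhammer a (i+j) * pochhammer (- real l) j / (pochhammer a j * fact j))
       = pochhammer a i * pochhammer (- real i) l / pochhammer a l"
proof -
  have "(\<Sum>j=0..n. pochhammer a (i+j) * pochhammer (- real l) j / (pochhammer a j * fact j))
      = (\<Sum>j=0..l. pochhammer a (i+j) * pochhammer (- real l) j / (pochhammer a j * fact j))"
    using ln by (intro sum.mono_neutral_right) (auto simp: pochhammer_of_nat_eq_0_lemma)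
  also have "\<dots> = pochhammer a i * (\<Sum>j=0..l. pochhammer (a + real i) j * pochhammer (- real l) j
      / (of_nat (fact j) * pochhammer a j))"
    unfolding sum_distrib_left
  proof (intro sum.cong refl)
    fix j
    have "pochhammer a (i+j) = pochhammer a i * pochhammer (a + real i) j"
      by (rule pochhammer_product')
    then show "pochhammer a (i+j) * pochhammer (- real l) j / (pochhammer a j * fact j)
      = pochhammer a i * (pochhammer (a + real i) j * pochhammer (- real l) j
      / (of_nat (fact j) * pochhammer a j))" by (simp add: mult.commute mult.left_commute)
  qed
  also have "\<dots> = pochhammer a i * (pochhammer (a - (a + real i)) l / pochhammer a l)"
    using a by (subst Vandermonde_pochhammer) auto
  finally show ?thesis by simp
qed

lemma alt_sum:
  "(\<Sum>m=0..N. (-1::real)^m * real (N choose m)) = (if N = 0 then 1 else 0)"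
  using choose_alternating_sum[of N, where 'a=real] by (auto simp: atLeast0AtMost mult.commute)

lemma lemB:
  assumes "i \<le> n"
  shows "(\<Sum>l=0..n. (-1::real)^l * real (i choose l) * real (l choose k))
        = (if i = k then (-1)^k else 0)"
proof (cases "k \<le> i")
  case False
  then have "\<And>l. l \<in> {0..n} \<Longrightarrow> (-1::real)^l * real (i choose l) * real (l choose k) = 0"
    by (metis binomial_eq_0 le_trans linorder_not_le mult_eq_0_iff of_nat_0)
  then show ?thesis using False by (simp add: sum.neutral)
next
  case True
  have "(\<Sum>l=0..n. (-1::real)^l * real (i choose l) * real (l choose k))
      = (\<Sum>l=k..i. (-1::real)^l * real (i choose l) * real (l choose k))"
    using assms True by (intro sum.mono_neutral_right) auto
  also have "\<dots> = (\<Sum>m=0..i-k. (-1::real)^(m+k) * real (i choose (m+k)) * real ((m+k) choose k))"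
    using True by (intro sum.reindex_bij_witness[where j="\<lambda>l. l - k" and i="\<lambda>m. m + k"]) auto
  also have "\<dots> = (\<Sum>m=0..i-k. (-1::real)^k * real (i choose k) * ((-1)^m * real ((i-k) choose m)))"
  proof (intro sum.cong refl)
    fix m assume "m \<in> {0..i-k}"
    have "(i choose (m+k)) * ((m+k) choose k) = (i choose k) * ((i-k) choose (m+k-k))"
      by (rule choose_mult) (use True \<open>m \<in> {0..i-k}\<close> in auto)
    then have "real (i choose (m+k)) * real ((m+k) choose k) = real (i choose k) * real ((i-k) choose m)"
      by (metis add_diff_cancel_right' of_nat_mult)
    then show "(-1::real)^(m+k) * real (i choose (m+k)) * real ((m+k) choose k)
        = (-1::real)^k * real (i choose k) * ((-1)^m * real ((i-k) choose m))"
      by (simp add: power_add algebra_simps)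
  qed
  also have "\<dots> = (-1::real)^k * real (i choose k) * (if i - k = 0 then 1 else 0)"
    by (simp add: sum_distrib_left[symmetric] alt_sum)
  finally show ?thesis using True by auto
qed

lemma key:
  fixes a :: real
  assumes a: "a > 0" and i: "i \<le> n" and k: "k \<le> n"
  shows "(\<Sum>j=0..n. pochhammer a (i+j) * (\<Sum>l=0..n. pochhammer a l * pochhammer (- real l) j
      * pochhammer (- real l) k / (fact l * pochhammer a j * pochhammer a k * fact j * fact k)))
    = (if i = k then 1 else 0)"
proof -
  let ?P = "pochhammer a"
  let ?Q = "\<lambda>l j. pochhammer (- real l) j"
  have Pnz: "\<And>j. ?P j \<noteq> 0" using a by (metis less_irrefl pochhammer_pos)
  have "(\<Sum>j=0..n. ?P (i+j) * (\<Sum>l=0..n. ?P l * ?Q l j * ?Q l k / (fact l * ?P j * ?P k * fact j * fact k)))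
     = (\<Sum>l=0..n. (?P l * ?Q l k / (fact l * ?P k * fact k)) *
          (\<Sum>j=0..n. ?P (i+j) * ?Q l j / (?P j * fact j)))"
    unfolding sum_distrib_left
    by (subst sum.swap) (intro sum.cong refl, simp add: field_simps)
  also have "\<dots> = (\<Sum>l=0..n. (?P l * ?Q l k / (fact l * ?P k * fact k)) * (?P i * ?Q i l / ?P l))"
    using a by (intro sum.cong refl) (simp add: lemA)
  also have "\<dots> = (\<Sum>l=0..n. (?P i / ?P k * (-1)^k) * ((-1)^l * real (i choose l) * real (l choose k)))"
  proof (intro sum.cong refl)
    fix l
    show "(?P l * ?Q l k / (fact l * ?P k * fact k)) * (?P i * ?Q i l / ?P l)
       = (?P i / ?P k * (-1)^k) * ((-1)^l * real (i choose l) * real (l choose k))"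
      unfolding Q_choose using Pnz[of l] Pnz[of k] by (simp add: field_simps)
  qed
  also have "\<dots> = (?P i / ?P k * (-1)^k) * (if i = k then (-1)^k else 0)"
    by (simp only: sum_distrib_left[symmetric] lemB[OF i])
  also have "\<dots> = (if i = k then 1 else 0)"
    using Pnz[of k] by (simp flip: power_add)
  finally show ?thesis .
qed

theorem mainTheorem2:
  fixes \<alpha> :: real and n :: nat
  assumes "\<alpha> > -1"
  shows "invertible_mat (hankel_poch \<alpha> n)
    \<and> hankel_poch \<alpha> n * hankel_poch_inv \<alpha> n = 1\<^sub>m (Suc n)
    \<and> hankel_poch_inv \<alpha> n * hankel_poch \<alpha> n = 1\<^sub>m (Suc n)"
proof -
  have a: "\<alpha> + 1 > 0" using assms by simp
  have H: "hankel_poch \<alpha> n \<in> carrier_mat (Suc n) (Suc n)" by (simp add: hankel_poch_def)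
  have B: "hankel_poch_inv \<alpha> n \<in> carrier_mat (Suc n) (Suc n)" by (simp add: hankel_poch_inv_def)
  have HB: "hankel_poch \<alpha> n * hankel_poch_inv \<alpha> n = 1\<^sub>m (Suc n)"
  proof (rule eq_matI)
    fix i k assume i: "i < dim_row (1\<^sub>m (Suc n) :: real mat)" and k: "k < dim_col (1\<^sub>m (Suc n) :: real mat)"
    then have i': "i \<le> n" and k': "k \<le> n" by auto
    have "(hankel_poch \<alpha> n * hankel_poch_inv \<alpha> n) $$ (i, k) =
      (\<Sum>j=0..n. pochhammer (\<alpha>+1) (i+j) * (\<Sum>l=0..n. pochhammer (\<alpha>+1) l * pochhammer (- real l) j
      * pochhammer (- real l) k / (fact l * pochhammer (\<alpha>+1) j * pochhammer (\<alpha>+1) k * fact j * fact k)))"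
      using i k by (simp add: hankel_poch_def hankel_poch_inv_def scalar_prod_def atLeastLessThanSuc_atLeastAtMost)
    also have "\<dots> = (if i = k then 1 else 0)" by (rule key[OF a i' k'])
    finally show "(hankel_poch \<alpha> n * hankel_poch_inv \<alpha> n) $$ (i, k) = 1\<^sub>m (Suc n) $$ (i, k)"
      using i k by simp
  qed (use H B in auto)
  have BH: "hankel_poch_inv \<alpha> n * hankel_poch \<alpha> n = 1\<^sub>m (Suc n)"
    by (rule mat_mult_left_right_inverse[OF H B HB])
  have "invertible_mat (hankel_poch \<alpha> n)"
    unfolding invertible_mat_def inverts_mat_def using H B HB BH by auto
  then show ?thesis using HB BH by blast
qed

end
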